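(* For each $n \geq 3$, $\operatorname{ssp}(K_n) \geq n$.
   Context: A family $\mathcal{P}$ of paths in a graph $G$ is strong-separating if for every ordered pair of distinct edges $e,f$ of $G$ there is a path in $\mathcal{P}$ containing $e$ but not $f$; $\operatorname{ssp}(G)$ is the minimum size of such a family. $K_n$ is the complete graph on $n$ vertices. *)

theory Defs
  imports Main
begin

definition complete_graph_edges :: "nat \<Rightarrow> nat set set" where
  "complete_graph_edges n = {{u, v} | u v. u < n \<and> v < n \<and> u \<noteq> v}"

definition is_path :: "'a set set \<Rightarrow> 'a list \<Rightarrow> bool" where
  "is_path E p \<longleftrightarrow> p \<noteq> [] \<and> distinct p \<and>
     (\<forall>i. Suc i < length p \<longrightarrow> {p ! i, p ! Suc i} \<in> E)"

definition path_edges :: "'a list \<Rightarrow> 'a set set" where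
  "path_edges p = {{p ! i, p ! Suc i} | i. Suc i < length p}"

definition strong_separating :: "'a set set \<Rightarrow> 'a list set \<Rightarrow> bool" where
  "strong_separating E P \<longleftrightarrow> (\<forall>p\<in>P. is_path E p) \<and>
     (\<forall>e\<in>E. \<forall>f\<in>E. e \<noteq> f \<longrightarrow> (\<exists>p\<in>P. e \<in> path_edges p \<and> f \<notin> path_edges p))"

definition ssp :: "'a set set \<Rightarrow> nat" where
  "ssp E = (LEAST k. \<exists>P. finite P \<and> card P = k \<and> strong_separating E P)"

end

theory Submission
  imports Defs
begin

definition Aat :: "nat \<Rightarrow> nat list \<Rightarrow> nat set set" where
  "Aat x p = {e \<in> path_edges p. x \<in> e}"

definition wt :: "nat \<Rightarrow> nat list \<Rightarrow> nat" where
  "wt x p = (if card (Aat x p) = 1 then 2 else 1)"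

definition rr :: "nat list set \<Rightarrow> nat \<Rightarrow> nat set \<Rightarrow> nat" where
  "rr P x e = (\<Sum>p\<in>P. if e \<in> Aat x p then wt x p else 0)"

definition star :: "nat \<Rightarrow> nat \<Rightarrow> nat set set" where
  "star n x = {e \<in> complete_graph_edges n. x \<in> e}"

lemma path_edges_img: "path_edges p = (\<lambda>i. {p!i, p!Suc i}) ` {i. Suc i < length p}"
  unfolding path_edges_def by auto

lemma finite_path_edges: "finite (path_edges p)"
proof -
  have "{i. Suc i < length p} \<subseteq> {..<length p}" by auto
  then have "finite {i. Suc i < length p}" by (rule finite_subset) auto
  then show ?thesis unfolding path_edges_img by auto
qed

lemma finite_Aat: "finite (Aat x p)"
  unfolding Aat_def using finite_path_edges[of p] by auto

lemma card_Aat_le2: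
  assumes "distinct p"
  shows "card (Aat x p) \<le> 2"
proof (cases "x \<in> set p")
  case False
  then have "Aat x p = {}" unfolding Aat_def path_edges_def
    by (auto simp: in_set_conv_nth dest: Suc_lessD)
  then show ?thesis by simp
next
  case True
  then obtain j where j: "j < length p" "p ! j = x" by (auto simp: in_set_conv_nth)
  have "Aat x p \<subseteq> {{p!j, p!Suc j}, {p!(j-1), p!j}}"
  proof
    fix e assume "e \<in> Aat x p"
    then obtain i where i: "Suc i < length p" "e = {p!i, p!Suc i}" "x \<in> e"
      unfolding Aat_def path_edges_def by auto
    then have "p!i = p!j \<or> p!Suc i = p!j" using j by auto
    then have "i = j \<or> Suc i = j" using assms i j nth_eq_iff_index_eq
      by (metis Suc_lessD)
    then show "e \<in> {{p!j, p!Suc j}, {p!(j-1), p!j}}" using i by auto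
  qed
  then have "card (Aat x p) \<le> card {{p!j, p!Suc j}, {p!(j-1), p!j}}"
    by (intro card_mono) auto
  also have "\<dots> \<le> 2" by (simp add: card_insert_le_m1)
  finally show ?thesis .
qed

lemma finite_cge: "finite (complete_graph_edges n)"
proof -
  have "complete_graph_edges n \<subseteq> Pow {0..<n}" unfolding complete_graph_edges_def by auto
  then show ?thesis by (rule finite_subset) auto
qed

lemma card_star:
  assumes "x < n" shows "card (star n x) = n - 1"
proof -
  have "star n x = (\<lambda>u. {x,u}) ` ({0..<n} - {x})"
  proof
    show "star n x \<subseteq> (\<lambda>u. {x,u}) ` ({0..<n} - {x})"
    proof
      fix e assume "e \<in> star n x"
      then obtain a b where e: "e = {a,b}" "a < n" "b < n" "a \<noteq> b" "x \<in> e"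
        unfolding star_def complete_graph_edges_def by auto
      show "e \<in> (\<lambda>u. {x,u}) ` ({0..<n} - {x})"
      proof (cases "x = a")
        case True then show ?thesis using e by auto
      next
        case False then have "x = b" "e = {x,a}" using e by auto
        then show ?thesis using e by auto
      qed
    qed
    show "(\<lambda>u. {x,u}) ` ({0..<n} - {x}) \<subseteq> star n x"
      unfolding star_def complete_graph_edges_def using assms by fastforce
  qed
  moreover have "inj_on (\<lambda>u. {x,u}) ({0..<n} - {x})"
    by (auto simp: inj_on_def doubleton_eq_iff)
  ultimately show ?thesis using assms by (simp add: card_image)
qed

lemma sum_rr:
  assumes "finite P" "\<forall>p\<in>P. is_path (complete_graph_edges n) p"
  shows "(\<Sum>e\<in>star n x. rr P x e) = 2 * card {p\<in>P. Aat x p \<noteq> {}}"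
proof -
  have fs: "finite (star n x)" unfolding star_def using finite_cge by auto
  have inner: "(\<Sum>e\<in>star n x. if e \<in> Aat x p then wt x p else 0) = (if Aat x p \<noteq> {} then 2 else 0)"
    if "p \<in> P" for p
  proof -
    have d: "distinct p" and sub: "path_edges p \<subseteq> complete_graph_edges n"
      using assms(2) that unfolding is_path_def path_edges_def by auto
    have As: "Aat x p \<subseteq> star n x" using sub unfolding Aat_def star_def by auto
    have "(\<Sum>e\<in>star n x. if e \<in> Aat x p then wt x p else 0) = (\<Sum>e\<in>{e\<in>star n x. e \<in> Aat x p}. wt x p)"
      using fs by (rule sum.inter_filter[symmetric])
    also have "{e\<in>star n x. e \<in> Aat x p} = Aat x p" using As by auto
    also have "(\<Sum>e\<in>Aat x p. wt x p) = card (Aat x p) * wt x p" by simp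
    also have "\<dots> = (if Aat x p \<noteq> {} then 2 else 0)"
      using card_Aat_le2[OF d, of x] finite_Aat[of x p] unfolding wt_def
      by (cases "card (Aat x p)") (auto simp: numeral_2_eq_2 le_Suc_eq)
    finally show ?thesis .
  qed
  have "(\<Sum>e\<in>star n x. rr P x e) = (\<Sum>p\<in>P. \<Sum>e\<in>star n x. if e \<in> Aat x p then wt x p else 0)"
    unfolding rr_def by (rule sum.swap)
  also have "\<dots> = (\<Sum>p\<in>P. if Aat x p \<noteq> {} then 2 else 0)"
    using inner by (rule sum.cong[OF refl])
  also have "\<dots> = (\<Sum>p\<in>{p\<in>P. Aat x p \<noteq> {}}. 2)"
    using assms(1) by (rule sum.inter_filter[symmetric])
  also have "\<dots> = 2 * card {p\<in>P. Aat x p \<noteq> {}}" by simp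
  finally show ?thesis .
qed


lemma path_distinct: "is_path E p \<Longrightarrow> distinct p" unfolding is_path_def by auto

lemma path_sub: "is_path E p \<Longrightarrow> path_edges p \<subseteq> E"
  unfolding is_path_def path_edges_def by auto

lemma sep:
  assumes "strong_separating E P" "e \<in> E" "f \<in> E" "e \<noteq> f"
  shows "\<exists>p\<in>P. e \<in> path_edges p \<and> f \<notin> path_edges p"
  using assms unfolding strong_separating_def by blast

lemma rr_ge2:
  assumes fP: "finite P" and ss: "strong_separating (complete_graph_edges n) P"
    and n: "n \<ge> 3" and x: "x < n" and e: "e \<in> star n x"
  shows "rr P x e \<ge> 2"
proof -
  have "card (star n x) \<ge> 2" using card_star[OF x] n by simp
  then have "\<not> star n x \<subseteq> {e}"
    using card_mono[of "{e}" "star n x"] by auto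
  then obtain f where f: "f \<in> star n x" "f \<noteq> e" by auto
  have eE: "e \<in> complete_graph_edges n" and xe: "x \<in> e" using e unfolding star_def by auto
  have fE: "f \<in> complete_graph_edges n" using f unfolding star_def by auto
  obtain p where p: "p \<in> P" "e \<in> path_edges p"
    using ss eE fE f(2) unfolding strong_separating_def by metis
  have pp: "is_path (complete_graph_edges n) p" using ss p unfolding strong_separating_def by auto
  have eA: "e \<in> Aat x p" using p xe unfolding Aat_def by auto
  have c2: "card (Aat x p) \<le> 2" using card_Aat_le2[OF path_distinct[OF pp]] .
  have c1: "card (Aat x p) \<ge> 1" using eA finite_Aat[of x p]
    by (metis One_nat_def Suc_leI card_gt_0_iff empty_iff)
  define g where "g = (\<lambda>q. if e \<in> Aat x q then wt x q else 0)"
  have rrg: "rr P x e = sum g P" unfolding rr_def g_def by simp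
  show ?thesis
  proof (cases "card (Aat x p) = 1")
    case True
    then have "g p = 2" unfolding g_def wt_def using eA by simp
    moreover have "g p \<le> sum g P" using p(1) fP by (intro member_le_sum) auto
    ultimately show ?thesis using rrg by simp
  next
    case False
    then have "card (Aat x p) = 2" using c1 c2 by simp
    then have "\<not> Aat x p \<subseteq> {e}"
      using card_mono[of "{e}" "Aat x p"] by auto
    then obtain h where h: "h \<in> Aat x p" "h \<noteq> e" by auto
    have hE: "h \<in> complete_graph_edges n" using h(1) path_sub[OF pp] unfolding Aat_def by auto
    obtain q where q: "q \<in> P" "e \<in> path_edges q" "h \<notin> path_edges q"
      using ss eE hE h(2) unfolding strong_separating_def by metis
    have qp: "q \<noteq> p" using q h(1) unfolding Aat_def by auto
    have "g p \<ge> 1" "g q \<ge> 1" using eA q xe unfolding g_def wt_def Aat_def by auto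
    then have "sum g {p,q} \<ge> 2" using qp by simp
    also have "sum g {p,q} \<le> sum g P" using fP p(1) q(1) by (intro sum_mono2) auto
    finally show ?thesis using rrg by simp
  qed
qed


lemma exists_ss: "\<exists>P. finite P \<and> strong_separating (complete_graph_edges n) P"
proof -
  define P where "P = (\<lambda>(u,v). [u,v]) ` {(u,v). u < n \<and> v < n \<and> u \<noteq> v}"
  have "{(u,v). u < n \<and> v < n \<and> u \<noteq> v} \<subseteq> {0..<n} \<times> {0..<n}" by auto
  then have "finite {(u,v). u < n \<and> v < n \<and> u \<noteq> v}" by (rule finite_subset) auto
  then have fin: "finite P" unfolding P_def by auto
  have pe: "path_edges [u,v] = {{u,v}}" for u v :: nat
    unfolding path_edges_def by auto
  have "strong_separating (complete_graph_edges n) P"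
    unfolding strong_separating_def
  proof (intro conjI ballI impI)
    fix p assume "p \<in> P"
    then obtain u v where uv: "p = [u,v]" "u < n" "v < n" "u \<noteq> v" unfolding P_def by auto
    have "{u,v} \<in> complete_graph_edges n" using uv unfolding complete_graph_edges_def by auto
    then show "is_path (complete_graph_edges n) p" using uv unfolding is_path_def
      by (auto simp: less_Suc_eq)
  next
    fix e f assume "e \<in> complete_graph_edges n" "f \<in> complete_graph_edges n" "e \<noteq> f"
    then obtain u v where uv: "e = {u,v}" "u < n" "v < n" "u \<noteq> v" unfolding complete_graph_edges_def by auto
    have "[u,v] \<in> P" using uv unfolding P_def by auto
    then show "\<exists>p\<in>P. e \<in> path_edges p \<and> f \<notin> path_edges p"
      using \<open>e \<noteq> f\<close> pe uv by (intro bexI[of _ "[u,v]"]) auto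
  qed
  then show ?thesis using fin by auto
qed


lemma lower_sum:
  assumes fP: "finite P" and ss: "strong_separating (complete_graph_edges n) P"
    and n: "n \<ge> 3" and x: "x < n"
  shows "2 * (n - 1) \<le> 2 * card {p\<in>P. Aat x p \<noteq> {}}"
proof -
  have pth: "\<forall>p\<in>P. is_path (complete_graph_edges n) p" using ss unfolding strong_separating_def by auto
  have "card (star n x) * 2 \<le> (\<Sum>e\<in>star n x. rr P x e)"
    using sum_bounded_below[of "star n x" "2::nat" "rr P x"] rr_ge2[OF fP ss n x] by simp
  then show ?thesis using sum_rr[OF fP pth, of x] card_star[OF x] by simp
qed

lemma card_bound:
  assumes fP: "finite P" and ss: "strong_separating (complete_graph_edges n) P"
    and n: "n \<ge> 3"
  shows "card P \<ge> n"
proof -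
  let ?E = "complete_graph_edges n"
  have pth: "\<forall>p\<in>P. is_path ?E p" using ss unfolding strong_separating_def by auto
  have e01: "{0,1} \<in> ?E" "{0,2} \<in> ?E" "{0::nat,1} \<noteq> {0,2}"
  proof -
    show "{0,1} \<in> ?E" using n unfolding complete_graph_edges_def
      by (intro CollectI exI[of _ "0::nat"] exI[of _ "1::nat"]) auto
    show "{0,2} \<in> ?E" using n unfolding complete_graph_edges_def
      by (intro CollectI exI[of _ "0::nat"] exI[of _ "2::nat"]) auto
    show "{0::nat,1} \<noteq> {0,2}" by (auto simp: doubleton_eq_iff)
  qed
  obtain p where p: "p \<in> P" "{0,1} \<in> path_edges p"
    using sep[OF ss e01] by blast
  have pp: "is_path ?E p" using pth p by auto
  have d: "distinct p" using path_distinct[OF pp] .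
  have psub: "path_edges p \<subseteq> ?E" using path_sub[OF pp] .
  have "\<exists>i. Suc i < length p" using p(2) unfolding path_edges_def by blast
  then have len2: "length p \<ge> 2" by auto
  show ?thesis
  proof (cases "length p = 2")
    case True
    have "card (set p) = 2" using d True by (simp add: distinct_card)
    then have "\<not> {0..<n} \<subseteq> set p" using n card_mono[of "set p" "{0..<n}"] by auto
    then obtain x where "x \<in> {0..<n}" "x \<notin> set p" by blast
    then have x: "x < n" "x \<notin> set p" by auto
    have "Aat x p = {}" using x unfolding Aat_def path_edges_def
      by (auto simp: in_set_conv_nth dest: Suc_lessD)
    then have "{q\<in>P. Aat x q \<noteq> {}} \<subseteq> P - {p}" by auto
    then have "card {q\<in>P. Aat x q \<noteq> {}} \<le> card (P - {p})" using fP by (intro card_mono) auto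
    also have "\<dots> = card P - 1" using p(1) fP by simp
    finally show ?thesis using lower_sum[OF fP ss n x(1)] n by simp
  next
    case False
    then have len3: "length p \<ge> 3" using len2 by simp
    define v where "v = p ! 0"
    define e where "e = {p!0, p!1}"
    define f where "f = {p!1, p!2}"
    have eP: "e \<in> path_edges p" unfolding e_def path_edges_def using len3 by force
    have fP': "f \<in> path_edges p" unfolding f_def path_edges_def using len3
      by (intro CollectI exI[of _ "1::nat"]) (simp add: numeral_2_eq_2)
    have "p!0 \<noteq> p!2" using nth_eq_iff_index_eq[OF d, of 0 2] len3 by force
    have "p!0 \<noteq> p!1" using nth_eq_iff_index_eq[OF d, of 0 1] len3 by force
    then have ef: "e \<noteq> f" using \<open>p!0 \<noteq> p!2\<close> unfolding e_def f_def by (auto simp: doubleton_eq_iff)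
    have eE: "e \<in> ?E" "f \<in> ?E" using eP fP' psub by auto
    then have vn: "v < n" unfolding v_def e_def complete_graph_edges_def by (auto simp: doubleton_eq_iff)
    have estar: "e \<in> star n v" using eE unfolding star_def v_def e_def by auto
    have Av: "Aat v p = {e}"
    proof
      show "Aat v p \<subseteq> {e}"
      proof
        fix g assume "g \<in> Aat v p"
        then obtain i where i: "Suc i < length p" "g = {p!i, p!Suc i}" "v \<in> g"
          unfolding Aat_def path_edges_def by auto
        then have "p!i = p!0 \<or> p!Suc i = p!0" unfolding v_def by auto
        moreover have "p!i = p!0 \<Longrightarrow> i = 0"
          using nth_eq_iff_index_eq[OF d, of i 0] i(1) by force
        moreover have "p!Suc i \<noteq> p!0"
          using nth_eq_iff_index_eq[OF d, of "Suc i" 0] i(1) by force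
        ultimately have "i = 0" by blast
        then show "g \<in> {e}" using i unfolding e_def by auto
      qed
      show "{e} \<subseteq> Aat v p" using eP unfolding Aat_def e_def v_def by auto
    qed
    obtain q where q: "q \<in> P" "e \<in> path_edges q" "f \<notin> path_edges q"
      using sep[OF ss eE ef] by blast
    have qp: "q \<noteq> p" using q fP' by auto
    define g where "g = (\<lambda>q. if e \<in> Aat v q then wt v q else 0)"
    have rrg: "rr P v e = sum g P" unfolding rr_def g_def by simp
    have "g p = 2" using Av unfolding g_def wt_def by simp
    moreover have "g q \<ge> 1" using q unfolding g_def wt_def Aat_def e_def v_def by auto
    ultimately have "sum g {p,q} \<ge> 3" using qp by simp
    also have "sum g {p,q} \<le> sum g P" using fP p(1) q(1) by (intro sum_mono2) auto
    finally have r3: "rr P v e \<ge> 3" using rrg by simp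
    have fs: "finite (star n v)" unfolding star_def using finite_cge by auto
    have "(\<Sum>e'\<in>star n v. rr P v e') = rr P v e + (\<Sum>e'\<in>star n v - {e}. rr P v e')"
      using fs estar by (rule sum.remove)
    moreover have "card (star n v - {e}) * 2 \<le> (\<Sum>e'\<in>star n v - {e}. rr P v e')"
      using sum_bounded_below[of "star n v - {e}" "2::nat" "rr P v"] rr_ge2[OF fP ss n vn] by simp
    moreover have "card (star n v - {e}) = n - 2" using card_star[OF vn] estar fs by simp
    moreover have "card {q\<in>P. Aat v q \<noteq> {}} \<le> card P" using fP by (intro card_mono) auto
    ultimately show ?thesis using sum_rr[OF fP pth, of v] r3 n by linarith
  qed
qed

theorem proposition2p1:
  fixes n :: nat
  assumes "n \<ge> 3"
  shows "ssp (complete_graph_edges n) \<ge> n"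
proof -
  let ?Q = "\<lambda>k. \<exists>P. finite P \<and> card P = k \<and> strong_separating (complete_graph_edges n) P"
  obtain P0 where "finite P0" "strong_separating (complete_graph_edges n) P0" using exists_ss by blast
  then have "?Q (card P0)" by blast
  then have "?Q (ssp (complete_graph_edges n))" unfolding ssp_def by (rule LeastI)
  then obtain P where P: "finite P" "card P = ssp (complete_graph_edges n)"
    "strong_separating (complete_graph_edges n) P" by blast
  have "n \<le> card P" using card_bound[OF P(1) P(3) assms] .
  then show ?thesis using P(2) by simp
qed

end
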